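(* Let $(X,\mu)$ be a non-atomic probability measure space, $\mathcal{T}$ a tree on $X$, $\mathcal{M}=\mathcal{M}_{\mathcal{T}}$ the associated maximal operator, $p>1$, $k=p/(p-1)$, $F>0$ and $0<f\le kF$. Let $$B_1(f,F)=\sup\Big\{\|\mathcal{M}\phi\|_{p,\infty} : \phi\ge0,\ \int_X\phi\,d\mu=f,\ \|\phi\|_{p,\infty}=F\Big\}.$$ Then $B_1(f,F)=kF$.
   Context: A tree on $(X,\mu)$ is a set $\mathcal{T}$ of measurable subsets of $X$ such that: (i) $X\in\mathcal{T}$ and $\mu(I)>0$ for every $I\in\mathcal{T}$; (ii) every $I\in\mathcal{T}$ has an associated finite subset $\mathcal{C}(I)\subseteq\mathcal{T}$ with at least two elements, whose elements are pairwise almost disjoint (i.e. intersections have measure zero) subsets of $I$ with union $I$; (iii) $\mathcal{T}=\bigcup_{m\ge0}\mathcal{T}_{(m)}$ where $\mathcal{T}_{(0)}=\{X\}$ and $\mathcal{T}_{(m+1)}=\bigcup_{I\in\mathcal{T}_{(m)}}\mathcal{C}(I)$; (iv) $\lim_{m\to\infty}\sup_{I\in\mathcal{T}_{(m)}}\mu(I)=0$. The associated maximal operator is $\mathcal{M}_{\mathcal{T}}\phi(x)=\sup\{\frac{1}{\mu(I)}\int_I|\phi|\,d\mu : x\in I\in\mathcal{T}\}$ for $\phi\in L^1(X,\mu)$. $\|g\|_{p,\infty}=\sup\{\lambda\,\mu(\{|g|>\lambda\})^{1/p}:\lambda>0\}$. *)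

theory Defs
  imports "HOL-Probability.Probability"
begin

definition nonatomic :: "'a measure \<Rightarrow> bool" where
  "nonatomic M \<longleftrightarrow>
     (\<forall>A\<in>sets M. 0 < emeasure M A \<longrightarrow>
        (\<exists>B\<in>sets M. B \<subseteq> A \<and> 0 < emeasure M B \<and> emeasure M B < emeasure M A))"

primrec tree_level :: "'a set \<Rightarrow> ('a set \<Rightarrow> 'a set set) \<Rightarrow> nat \<Rightarrow> 'a set set" where
  "tree_level X C 0 = {X}"
| "tree_level X C (Suc m) = \<Union> (C ` tree_level X C m)"

definition is_tree :: "'a measure \<Rightarrow> 'a set set \<Rightarrow> ('a set \<Rightarrow> 'a set set) \<Rightarrow> bool" where
  "is_tree M T C \<longleftrightarrow>
     space M \<in> T \<and>
     (\<forall>I\<in>T. I \<in> sets M \<and> 0 < measure M I) \<and>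
     (\<forall>I\<in>T. finite (C I) \<and> 2 \<le> card (C I) \<and> C I \<subseteq> T \<and>
        (\<forall>J1\<in>C I. \<forall>J2\<in>C I. J1 \<noteq> J2 \<longrightarrow> measure M (J1 \<inter> J2) = 0) \<and>
        (\<forall>J\<in>C I. J \<subseteq> I) \<and> \<Union> (C I) = I) \<and>
     T = (\<Union>m. tree_level (space M) C m) \<and>
     (\<lambda>m. SUP I\<in>tree_level (space M) C m. measure M I) \<longlonglongrightarrow> 0"

definition tree_maximal :: "'a measure \<Rightarrow> 'a set set \<Rightarrow> ('a \<Rightarrow> real) \<Rightarrow> 'a \<Rightarrow> ennreal" where
  "tree_maximal M T \<phi> x =
     (SUP I\<in>{I\<in>T. x \<in> I}. ennreal ((LINT y:I|M. \<bar>\<phi> y\<bar>) / measure M I))"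

text \<open>Weak L^p quasi-norm of an [0,\<infinity>]-valued function:
  sup over \<lambda>>0 of \<lambda> \<mu>({|g|>\<lambda>})^(1/p).  (M is finite in our application.)\<close>
definition weak_norm :: "'a measure \<Rightarrow> real \<Rightarrow> ('a \<Rightarrow> ennreal) \<Rightarrow> ennreal" where
  "weak_norm M p g =
     (SUP t\<in>{0<..}. ennreal (t * (measure M {x\<in>space M. ennreal t < g x}) powr (1 / p)))"

end

theory Submission
  imports Defs
begin

context prob_space begin

lemma halving:
  assumes na: "nonatomic M" and A: "A \<in> sets M" "measure M A > 0"
  shows "\<exists>B\<in>sets M. B \<subseteq> A \<and> 0 < measure M B \<and> measure M B \<le> measure M A / 2"
proof -
  from na A obtain B where B: "B \<in> sets M" "B \<subseteq> A" "0 < emeasure M B" "emeasure M B < emeasure M A"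
    unfolding nonatomic_def by (auto simp: emeasure_eq_measure)
  hence B': "0 < measure M B" "measure M B < measure M A"
    by (auto simp: emeasure_eq_measure ennreal_less_iff)
  show ?thesis
  proof (cases "measure M B \<le> measure M A / 2")
    case True with B B' show ?thesis by blast
  next
    case False
    have "measure M (A - B) = measure M A - measure M B"
      using B A by (simp add: finite_measure_Diff)
    with False B' B A show ?thesis
      by (intro bexI[of _ "A - B"]) auto
  qed
qed

lemma small_subset:
  assumes na: "nonatomic M" and A: "A \<in> sets M" "measure M A > 0" and e: "e > 0"
  shows "\<exists>B\<in>sets M. B \<subseteq> A \<and> 0 < measure M B \<and> measure M B \<le> e"
proof -
  have "\<exists>B\<in>sets M. B \<subseteq> A \<and> 0 < measure M B \<and> measure M B \<le> measure M A / 2 ^ n" for n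
  proof (induction n)
    case 0 then show ?case using A by auto
  next
    case (Suc n)
    then obtain B where B: "B\<in>sets M" "B \<subseteq> A" "0 < measure M B" "measure M B \<le> measure M A / 2 ^ n"
      by blast
    from halving[OF na B(1,3)] obtain D where D: "D\<in>sets M" "D \<subseteq> B" "0 < measure M D" "measure M D \<le> measure M B / 2"
      by blast
    have "measure M D * 2 ^ Suc n \<le> measure M B * 2 ^ n"
      using D(4) by (simp add: field_simps mult_right_mono)
    also have "\<dots> \<le> measure M A" using B(4) by (simp add: field_simps)
    finally show ?case using B D by (intro bexI[of _ D]) (auto simp: field_simps)
  qed
  moreover obtain n where "(1/2::real) ^ n < e / measure M A"
    using real_arch_pow_inv[of "e / measure M A" "1/2"] e A by auto
  hence "measure M A / 2 ^ n \<le> e" using A by (simp add: field_simps power_divide)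
  ultimately show ?thesis by (meson order_trans)
qed

end

context prob_space begin

lemma exact_subset:
  assumes na: "nonatomic M" and A: "A \<in> sets M" and t: "0 \<le> t" "t \<le> measure M A"
  shows "\<exists>B\<in>sets M. B \<subseteq> A \<and> measure M B = t"
proof -
  define S where "S B = {measure M C | C. C \<in> sets M \<and> C \<subseteq> A - B \<and> measure M B + measure M C \<le> t}" for B
  define \<sigma> where "\<sigma> B = Sup (S B)" for B
  define P where "P B C \<longleftrightarrow> C \<in> sets M \<and> C \<subseteq> A - B \<and> measure M B + measure M C \<le> t \<and> \<sigma> B \<le> 2 * measure M C" for B C
  define c where "c B = (SOME C. P B C)" for B
  define nxt where "nxt B = B \<union> c B" for B
  define Bs where "Bs n = (nxt ^^ n) {}" for n
  have bdd: "bdd_above (S B)" for B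
    unfolding S_def by (rule bdd_aboveI[of _ 1]) auto
  have Sne: "0 \<in> S B" if "measure M B \<le> t" for B
    unfolding S_def using that by (auto intro!: exI[of _ "{}"])
  have Pex: "P B (c B)" if Bh: "B \<in> sets M" "measure M B \<le> t" for B
  proof -
    have "\<exists>C. P B C"
    proof (cases "\<sigma> B \<le> 0")
      case True
      then show ?thesis unfolding P_def using Bh by (intro exI[of _ "{}"]) auto
    next
      case False
      hence "\<sigma> B / 2 < Sup (S B)" unfolding \<sigma>_def by simp
      then obtain x where "x \<in> S B" "\<sigma> B / 2 < x"
        using less_cSup_iff[of "S B" "\<sigma> B / 2"] bdd[of B] Sne[OF Bh(2)] by auto
      then show ?thesis unfolding P_def S_def by auto
    qed
    then show ?thesis unfolding c_def by (rule someI_ex)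
  qed
  have inv: "Bs n \<in> sets M \<and> Bs n \<subseteq> A \<and> measure M (Bs n) \<le> t" for n
  proof (induction n)
    case 0 then show ?case using t by (simp add: Bs_def)
  next
    case (Suc n)
    have "P (Bs n) (c (Bs n))" using Pex Suc by blast
    moreover have "Bs (Suc n) = Bs n \<union> c (Bs n)" by (simp add: Bs_def nxt_def)
    moreover have "measure M (Bs n \<union> c (Bs n)) = measure M (Bs n) + measure M (c (Bs n))"
      using calculation Suc by (intro finite_measure_Union) (auto simp: P_def)
    ultimately show ?case using Suc by (auto simp: P_def)
  qed
  have step: "measure M (Bs (Suc n)) = measure M (Bs n) + measure M (c (Bs n))"
     and Pn: "P (Bs n) (c (Bs n))" for n
  proof -
    show P: "P (Bs n) (c (Bs n))" using Pex inv by blast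
    have "Bs (Suc n) = Bs n \<union> c (Bs n)" by (simp add: Bs_def nxt_def)
    then show "measure M (Bs (Suc n)) = measure M (Bs n) + measure M (c (Bs n))"
      using P inv[of n] by (simp, intro finite_measure_Union) (auto simp: P_def)
  qed
  have inc: "incseq Bs"
    by (rule incseq_SucI) (simp add: Bs_def nxt_def)
  have sumB: "measure M (Bs n) = (\<Sum>i<n. measure M (c (Bs i)))" for n
  proof (induction n)
    case 0 then show ?case by (simp add: Bs_def)
  next
    case (Suc n) then show ?case using step[of n] by simp
  qed
  have "summable (\<lambda>i. measure M (c (Bs i)))"
    using inv sumB by (intro summableI_nonneg_bounded[of _ t]) auto
  hence c0: "(\<lambda>i. measure M (c (Bs i))) \<longlonglongrightarrow> 0" by (rule summable_LIMSEQ_zero)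
  define B where "B = (\<Union>n. Bs n)"
  have Bsets: "B \<in> sets M" "B \<subseteq> A" using inv by (auto simp: B_def)
  have lim: "(\<lambda>n. measure M (Bs n)) \<longlonglongrightarrow> measure M B"
    unfolding B_def using inv inc by (intro finite_Lim_measure_incseq) auto
  have Ble: "measure M B \<le> t"
    using inv by (intro LIMSEQ_le_const2[OF lim]) auto
  have Bn_le: "measure M (Bs n) \<le> measure M B" for n
    using Bsets inv by (intro finite_measure_mono) (auto simp: B_def)
  show ?thesis
  proof (cases "measure M B < t")
    case False then show ?thesis using Ble Bsets by (intro bexI[of _ B]) auto
  next
    case True
    have "measure M (A - B) = measure M A - measure M B"
      using Bsets A by (simp add: finite_measure_Diff)
    hence "measure M (A - B) > 0" using True t by simp
    from small_subset[OF na _ this, of "t - measure M B"] True A Bsets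
    obtain D where D: "D \<in> sets M" "D \<subseteq> A - B" "0 < measure M D" "measure M D \<le> t - measure M B"
      by auto
    have "measure M D \<le> \<sigma> (Bs n)" for n
    proof -
      have "measure M D \<in> S (Bs n)"
        unfolding S_def using D Bn_le[of n] by (intro CollectI exI[of _ D]) (auto simp: B_def)
      then show ?thesis unfolding \<sigma>_def using bdd by (rule cSup_upper)
    qed
    moreover obtain n where "measure M (c (Bs n)) < measure M D / 2"
      using c0 D(3) by (metis LIMSEQ_D abs_of_nonneg diff_zero half_gt_zero measure_nonneg order_refl real_norm_def)
    ultimately have "measure M D \<le> \<sigma> (Bs n)" "\<sigma> (Bs n) \<le> 2 * measure M (c (Bs n))"
      "measure M (c (Bs n)) < measure M D / 2" using Pn[of n] by (auto simp: P_def)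
    then show ?thesis by linarith
  qed
qed

end

definition midset :: "'a measure \<Rightarrow> 'a set \<Rightarrow> 'a set \<Rightarrow> 'a set" where
  "midset M S T = S \<union> (SOME B. B \<in> sets M \<and> B \<subseteq> T - S \<and> measure M B = (measure M T - measure M S) / 2)"

primrec dy :: "'a measure \<Rightarrow> 'a set \<Rightarrow> nat \<Rightarrow> nat \<Rightarrow> 'a set" where
  "dy M A 0 = (\<lambda>j. if j = 0 then {} else A)"
| "dy M A (Suc n) = (\<lambda>i. if even i then dy M A n (i div 2)
      else midset M (dy M A n (i div 2)) (dy M A n (i div 2 + 1)))"

context prob_space begin

lemma midset_prop:
  assumes na: "nonatomic M" and S: "S \<in> sets M" "T \<in> sets M" "S \<subseteq> T"
  shows "midset M S T \<in> sets M \<and> S \<subseteq> midset M S T \<and> midset M S T \<subseteq> T \<and>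
         measure M (midset M S T) = (measure M S + measure M T) / 2"
proof -
  have d: "measure M (T - S) = measure M T - measure M S"
    using S by (simp add: finite_measure_Diff)
  have "measure M S \<le> measure M T" using S by (simp add: finite_measure_mono)
  hence "\<exists>B\<in>sets M. B \<subseteq> T - S \<and> measure M B = (measure M T - measure M S) / 2"
    using S d by (intro exact_subset[OF na]) auto
  hence "\<exists>B. B \<in> sets M \<and> B \<subseteq> T - S \<and> measure M B = (measure M T - measure M S) / 2" by blast
  from someI_ex[OF this] obtain B where B: "B \<in> sets M" "B \<subseteq> T - S" "measure M B = (measure M T - measure M S) / 2"
    and eq: "midset M S T = S \<union> B" unfolding midset_def by auto
  have "measure M (S \<union> B) = measure M S + measure M B"
    using B S by (intro finite_measure_Union) auto
  also have "\<dots> = (measure M S + measure M T) / 2" using B(3) by (simp add: field_simps)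
  finally show ?thesis using B S eq by auto
qed

lemma dy_inv:
  assumes na: "nonatomic M" and A: "A \<in> sets M"
  shows "(\<forall>j\<le>2^n. dy M A n j \<in> sets M \<and> dy M A n j \<subseteq> A \<and>
            measure M (dy M A n j) = real j * measure M A / 2^n) \<and>
         (\<forall>j<2^n. dy M A n j \<subseteq> dy M A n (Suc j))"
proof (induction n)
  case 0 then show ?case using A by auto
next
  case (Suc n)
  note IH = Suc
  have mid: "midset M (dy M A n j) (dy M A n (Suc j)) \<in> sets M \<and>
      dy M A n j \<subseteq> midset M (dy M A n j) (dy M A n (Suc j)) \<and>
      midset M (dy M A n j) (dy M A n (Suc j)) \<subseteq> dy M A n (Suc j) \<and>
      measure M (midset M (dy M A n j) (dy M A n (Suc j))) =
        (measure M (dy M A n j) + measure M (dy M A n (Suc j))) / 2" if "j < 2^n" for j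
    using IH that by (intro midset_prop[OF na]) auto
  have P1: "dy M A (Suc n) i \<in> sets M \<and> dy M A (Suc n) i \<subseteq> A \<and>
            measure M (dy M A (Suc n) i) = real i * measure M A / 2^Suc n" if i: "i \<le> 2^Suc n" for i
  proof (cases "even i")
    case True
    then obtain j where j: "i = 2 * j" by blast
    with i have jl: "j \<le> 2^n" by simp
    have dyeq: "dy M A (Suc n) i = dy M A n j" using j by simp
    have h: "dy M A n j \<in> sets M" "dy M A n j \<subseteq> A" "measure M (dy M A n j) = real j * measure M A / 2^n"
      using IH jl by blast+
    have "real j * measure M A / 2^n = real i * measure M A / 2^Suc n" using j by (simp add: field_simps)
    then show ?thesis using h dyeq by simp
  next
    case False
    then obtain j where j: "i = 2 * j + 1" using oddE by blast
    with i have jl: "j < 2^n" by simp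
    have e: "i div 2 = j" "i div 2 + 1 = Suc j" using j by auto
    have "j \<le> 2^n" using jl by simp
    hence mj: "measure M (dy M A n j) = real j * measure M A / 2^n" using IH by blast
    have "Suc j \<le> 2^n" using jl by simp
    hence mj1: "measure M (dy M A n (Suc j)) = real (Suc j) * measure M A / 2^n"
      using IH by blast
    have dyeq: "dy M A (Suc n) i = midset M (dy M A n j) (dy M A n (Suc j))"
      using False by (simp add: e)
    have "measure M (midset M (dy M A n j) (dy M A n (Suc j))) = (real j * measure M A / 2^n + real (Suc j) * measure M A / 2^n) / 2"
      using mid[OF jl] mj mj1 by simp
    also have "\<dots> = real i * measure M A / 2^Suc n" using j by (simp add: field_simps)
    finally have m0: "measure M (midset M (dy M A n j) (dy M A n (Suc j))) = real i * measure M A / 2^Suc n" .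
    have "dy M A n (Suc j) \<subseteq> A" using IH \<open>Suc j \<le> 2^n\<close> by blast
    then show ?thesis unfolding dyeq using mid[OF jl] m0 by blast
  qed
  have P2: "dy M A (Suc n) i \<subseteq> dy M A (Suc n) (Suc i)" if i: "i < 2^Suc n" for i
  proof (cases "even i")
    case True
    then obtain j where j: "i = 2 * j" by blast
    with i have jl: "j < 2^n" by simp
    have e: "Suc i div 2 = j" "Suc i div 2 + 1 = Suc j" "i div 2 = j" using j by auto
    show ?thesis using mid[OF jl] True j by (simp add: e)
  next
    case False
    then obtain j where j: "i = 2 * j + 1" using oddE by blast
    with i have jl: "j < 2^n" by simp
    have e: "Suc i div 2 = Suc j" "i div 2 = j" "i div 2 + 1 = Suc j" using j by auto
    show ?thesis using mid[OF jl] False j by (simp add: e)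
  qed
  show ?case using P1 P2 by blast
qed

lemma dy_mono:
  assumes na: "nonatomic M" and A: "A \<in> sets M" and jj: "j \<le> j'" "j' \<le> 2^n"
  shows "dy M A n j \<subseteq> dy M A n j'"
  using jj
proof (induction j' rule: dec_induct)
  case base then show ?case by simp
next
  case (step m)
  have "m < 2^n" using step by simp
  hence "dy M A n m \<subseteq> dy M A n (Suc m)" using dy_inv[OF na A, of n] by blast
  moreover have "dy M A n j \<subseteq> dy M A n m" using step.IH \<open>m < 2^n\<close> by simp
  ultimately show ?case by blast
qed


lemma uniform_fun:
  assumes na: "nonatomic M" and A: "A \<in> sets M"
  shows "\<exists>v\<in>borel_measurable M. (\<forall>x\<in>A. 0 \<le> v x \<and> v x \<le> measure M A) \<and>
           (\<forall>b. 0 \<le> b \<and> b \<le> measure M A \<longrightarrow> measure M {x\<in>A. v x < b} = b)"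
proof -
  define \<alpha> where "\<alpha> = measure M A"
  define W where "W x = {real j / 2^n | n j. j \<le> 2^n \<and> x \<in> dy M A n j}" for x
  define v where "v x = (if x \<in> A then \<alpha> * Inf (W x) else 0)" for x
  have inv: "\<And>n j. j \<le> 2^n \<Longrightarrow> dy M A n j \<in> sets M \<and> dy M A n j \<subseteq> A \<and>
            measure M (dy M A n j) = real j * \<alpha> / 2^n"
    using dy_inv[OF na A] unfolding \<alpha>_def by blast
  have Wne: "1 \<in> W x" if "x \<in> A" for x
    unfolding W_def using that by (intro CollectI exI[of _ 0] exI[of _ "1::nat"]) auto
  have Wbdd: "bdd_below (W x)" for x
    unfolding W_def by (rule bdd_belowI[of _ 0]) auto
  have Wnn: "0 \<le> Inf (W x)" if "x \<in> A" for x
    using Wne[OF that] unfolding W_def by (intro cInf_greatest) auto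
  have Wle: "Inf (W x) \<le> 1" if "x \<in> A" for x
    using Wne[OF that] Wbdd by (intro cInf_lower) auto
  have a0: "0 \<le> \<alpha>" unfolding \<alpha>_def by simp
  have vb: "0 \<le> v x \<and> v x \<le> \<alpha>" if "x \<in> A" for x
    using Wnn[OF that] Wle[OF that] a0 that
    by (auto simp: v_def intro: mult_nonneg_nonneg mult_left_le)
  define Q where "Q b n = {j. j \<le> 2^n \<and> real j * \<alpha> / 2^n < b}" for b n
  define J where "J b n = Max (Q b n)" for b n
  define K where "K b n = dy M A n (J b n)" for b n
  have Qfin: "finite (Q b n)" for b n unfolding Q_def by auto
  have Q0: "0 \<in> Q b n" if "0 < b" for b n unfolding Q_def using that by auto
  have JQ: "J b n \<in> Q b n" if "0 < b" for b n
    unfolding J_def using Qfin Q0[OF that] by (intro Max_in) auto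
  have Jge: "j \<le> J b n" if "j \<in> Q b n" for b n j
    unfolding J_def using Qfin that by (intro Max_ge) auto
  have Ksets: "K b n \<in> sets M" "K b n \<subseteq> A" "measure M (K b n) = real (J b n) * \<alpha> / 2^n"
    if "0 < b" for b n using inv[of "J b n" n] JQ[OF that, of n] by (auto simp: K_def Q_def)
  have Klow: "b - \<alpha> / 2^n \<le> measure M (K b n)" if b: "0 < b" "b \<le> \<alpha>" for b n
  proof -
    have "J b n < 2^n"
    proof (rule ccontr)
      assume "\<not> J b n < 2^n"
      hence "J b n = 2^n" using JQ[OF b(1), of n] by (auto simp: Q_def)
      then show False using JQ[OF b(1), of n] b by (auto simp: Q_def)
    qed
    hence "Suc (J b n) \<notin> Q b n \<Longrightarrow> b \<le> real (Suc (J b n)) * \<alpha> / 2^n"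
      by (auto simp: Q_def not_less)
    moreover have "Suc (J b n) \<notin> Q b n" using Jge[of "Suc (J b n)" b n] by auto
    ultimately have "b \<le> real (Suc (J b n)) * \<alpha> / 2^n" by blast
    then show ?thesis using Ksets[OF b(1)] by (simp add: field_simps)
  qed
  have Kup: "measure M (K b n) < b" if "0 < b" for b n
    using Ksets[OF that] JQ[OF that, of n] by (simp add: Q_def)
  have Kinc: "incseq (K b)" if "0 < b" for b
  proof (rule incseq_SucI)
    fix n
    have "dy M A (Suc n) (2 * J b n) = K b n" by (simp add: K_def)
    moreover have "2 * J b n \<in> Q b (Suc n)" using JQ[OF that, of n] by (simp add: Q_def)
    hence "2 * J b n \<le> J b (Suc n)" by (rule Jge)
    moreover have "J b (Suc n) \<le> 2 ^ Suc n" using JQ[OF that, of "Suc n"] by (simp add: Q_def)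
    ultimately show "K b n \<subseteq> K b (Suc n)" unfolding K_def[of b "Suc n"]
      by (metis dy_mono[OF na A])
  qed
  have setK: "{x\<in>A. v x < b} = (\<Union>n. K b n)" if b: "0 < b" "b \<le> \<alpha>" for b
  proof (intro equalityI subsetI)
    fix x assume x: "x \<in> {x\<in>A. v x < b}"
    have ap: "0 < \<alpha>" using b by simp
    have "\<alpha> * Inf (W x) < b" using x by (auto simp: v_def)
    hence "Inf (W x) < b / \<alpha>" using ap by (simp add: field_simps)
    then obtain w where "w \<in> W x" "w < b / \<alpha>"
      using cInf_less_iff[of "W x"] Wne[of x] Wbdd x by auto
    then obtain n j where nj: "j \<le> 2^n" "x \<in> dy M A n j" "real j / 2^n < b / \<alpha>"
      unfolding W_def by auto
    hence "j \<in> Q b n" using ap by (simp add: Q_def field_simps)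
    hence "j \<le> J b n" by (rule Jge)
    moreover have "J b n \<le> 2^n" using JQ[OF b(1), of n] by (simp add: Q_def)
    ultimately have "x \<in> K b n" using nj dy_mono[OF na A] unfolding K_def by blast
    then show "x \<in> (\<Union>n. K b n)" by blast
  next
    fix x assume "x \<in> (\<Union>n. K b n)"
    then obtain n where n: "x \<in> K b n" by blast
    have ap: "0 < \<alpha>" using b by simp
    have xA: "x \<in> A" using Ksets[OF b(1)] n by blast
    have "real (J b n) / 2^n \<in> W x" unfolding W_def using JQ[OF b(1), of n] n
      by (auto simp: Q_def K_def)
    hence "Inf (W x) \<le> real (J b n) / 2^n" using Wbdd by (intro cInf_lower)
    moreover have "real (J b n) / 2^n < b / \<alpha>" using JQ[OF b(1), of n] ap
      by (simp add: Q_def field_simps)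
    ultimately have "Inf (W x) < b / \<alpha>" by linarith
    hence "v x < b" using xA ap by (simp add: v_def field_simps)
    then show "x \<in> {x\<in>A. v x < b}" using xA by blast
  qed
  have meas: "measure M {x\<in>A. v x < b} = b" if b: "0 \<le> b" "b \<le> \<alpha>" for b
  proof (cases "b = 0")
    case True
    have "{x\<in>A. v x < b} = {}" using vb True by (auto simp: not_less)
    then show ?thesis using True by (metis measure_empty)
  next
    case False
    hence bp: "0 < b" using b by simp
    have rs: "range (K b) \<subseteq> sets M" using Ksets(1)[OF bp] by blast
    have lim1: "(\<lambda>n. measure M (K b n)) \<longlonglongrightarrow> measure M (\<Union>n. K b n)"
      by (rule finite_Lim_measure_incseq[OF rs Kinc[OF bp]])
    have "(\<lambda>n. \<alpha> / 2^n) \<longlonglongrightarrow> 0" by (rule LIMSEQ_divide_realpow_zero) simp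
    hence "(\<lambda>n. b - \<alpha> / 2^n) \<longlonglongrightarrow> b - 0" by (intro tendsto_intros)
    hence limb: "(\<lambda>n. b - \<alpha> / 2^n) \<longlonglongrightarrow> b" by simp
    have ev1: "\<forall>\<^sub>F n in sequentially. b - \<alpha> / 2^n \<le> measure M (K b n)"
      using Klow[OF bp b(2)] by (intro always_eventually) blast
    have ev2: "\<forall>\<^sub>F n in sequentially. measure M (K b n) \<le> b"
      using Kup[OF bp] by (intro always_eventually) (blast intro: less_imp_le)
    have lim2: "(\<lambda>n. measure M (K b n)) \<longlonglongrightarrow> b"
      by (rule tendsto_sandwich[OF ev1 ev2 limb tendsto_const])
    show ?thesis using LIMSEQ_unique[OF lim1 lim2] setK[OF bp b(2)] by simp
  qed
  have vmeas: "v \<in> borel_measurable M"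
  proof (subst borel_measurable_iff_less, intro allI)
    fix b :: real
    have eq: "{x\<in>space M. v x < b} = {x\<in>A. v x < b} \<union> {x\<in>space M - A. 0 < b}"
      using sets.sets_into_space[OF A] by (auto simp: v_def)
    have "{x\<in>A. v x < b} \<in> sets M"
    proof (cases "b \<le> 0")
      case True
      have "{x\<in>A. v x < b} = {}"
      proof -
        { fix x assume "x \<in> A" "v x < b"
          with vb[of x] True have False by linarith }
        then show ?thesis by blast
      qed
      then show ?thesis by (metis sets.empty_sets)
    next
      case False
      hence bp: "0 < b" by simp
      show ?thesis
      proof (cases "b \<le> \<alpha>")
        case True
        have "(\<Union>n. K b n) \<in> sets M" using Ksets(1)[OF bp] by blast
        then show ?thesis using setK[OF bp True] by simp
      next
        case F2: False
        have "{x\<in>A. v x < b} = A"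
        proof -
          { fix x assume "x \<in> A"
            with vb[of x] F2 have "v x < b" by linarith }
          then show ?thesis by blast
        qed
        then show ?thesis using A by simp
      qed
    qed
    moreover have "{x\<in>space M - A. 0 < b} \<in> sets M" using A by (cases "0 < b") auto
    ultimately show "{x\<in>space M. v x < b} \<in> sets M" unfolding eq by blast
  qed
  show ?thesis using vmeas vb meas unfolding \<alpha>_def by blast
qed

end

context prob_space begin

lemma uniform_split:
  assumes na: "nonatomic M" and I: "I \<in> sets M"
  shows "\<exists>u\<in>borel_measurable M. (\<forall>x\<in>space M. 0 \<le> u x) \<and>
           (\<forall>x\<in>space M. u x < measure M I \<longrightarrow> x \<in> I) \<and>
           (\<forall>b. 0 \<le> b \<and> b \<le> 1 \<longrightarrow> measure M {x\<in>space M. u x < b} = b)"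
proof -
  define \<delta> where "\<delta> = measure M I"
  have CI: "space M - I \<in> sets M" using I by auto
  have mC: "measure M (space M - I) = 1 - \<delta>" using I by (simp add: prob_compl \<delta>_def)
  obtain v1 where v1m: "v1 \<in> borel_measurable M" and v1b: "\<forall>x\<in>I. 0 \<le> v1 x \<and> v1 x \<le> \<delta>"
    and v1d: "\<forall>b. 0 \<le> b \<and> b \<le> \<delta> \<longrightarrow> measure M {x\<in>I. v1 x < b} = b"
    using uniform_fun[OF na I] unfolding \<delta>_def by blast
  obtain v2 where v2m: "v2 \<in> borel_measurable M" and v2b: "\<forall>x\<in>space M - I. 0 \<le> v2 x \<and> v2 x \<le> 1 - \<delta>"
    and v2d: "\<forall>b. 0 \<le> b \<and> b \<le> 1 - \<delta> \<longrightarrow> measure M {x\<in>space M - I. v2 x < b} = b"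
    using uniform_fun[OF na CI] unfolding mC by blast
  define u where "u x = (if x \<in> I then v1 x else \<delta> + v2 x)" for x
  have um: "u \<in> borel_measurable M"
    unfolding u_def using v1m v2m I by measurable
  have d0: "0 \<le> \<delta>" "\<delta> \<le> 1" unfolding \<delta>_def by auto
  have unn: "\<forall>x\<in>space M. 0 \<le> u x" using v1b v2b d0 by (auto simp: u_def)
  have uI: "\<forall>x\<in>space M. u x < \<delta> \<longrightarrow> x \<in> I"
  proof (intro ballI impI)
    fix x assume x: "x \<in> space M" "u x < \<delta>"
    show "x \<in> I"
    proof (rule ccontr)
      assume "x \<notin> I"
      hence "0 \<le> v2 x" "u x = \<delta> + v2 x" using v2b x by (auto simp: u_def)
      then show False using x by linarith
    qed
  qed
  have ud: "measure M {x\<in>space M. u x < b} = b" if b: "0 \<le> b" "b \<le> 1" for b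
  proof -
    have S1: "{x\<in>I. v1 x < b} \<in> sets M"
    proof -
      have "{x\<in>I. v1 x < b} = I \<inter> {x\<in>space M. v1 x < b}" using sets.sets_into_space[OF I] by auto
      then show ?thesis using I v1m by simp
    qed
    have S2: "{x\<in>space M - I. v2 x < b - \<delta>} \<in> sets M"
    proof -
      have "{x\<in>space M - I. v2 x < b - \<delta>} = (space M - I) \<inter> {x\<in>space M. v2 x < b - \<delta>}" by auto
      then show ?thesis using CI v2m by simp
    qed
    have eq: "{x\<in>space M. u x < b} = {x\<in>I. v1 x < b} \<union> {x\<in>space M - I. v2 x < b - \<delta>}"
      using sets.sets_into_space[OF I] by (auto simp: u_def)
    have "measure M {x\<in>space M. u x < b} = measure M {x\<in>I. v1 x < b} + measure M {x\<in>space M - I. v2 x < b - \<delta>}"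
      unfolding eq using S1 S2 by (intro finite_measure_Union) auto
    also have "\<dots> = b"
    proof (cases "b \<le> \<delta>")
      case True
      have "{x\<in>space M - I. v2 x < b - \<delta>} = {}"
      proof -
        { fix x assume x: "x \<in> space M - I" "v2 x < b - \<delta>"
          have "0 \<le> v2 x" using v2b x(1) by blast
          with x(2) True have False by linarith }
        then show ?thesis by blast
      qed
      moreover have "measure M {x\<in>I. v1 x < b} = b" using v1d b True by blast
      ultimately show ?thesis by (metis add.right_neutral measure_empty)
    next
      case False
      have "{x\<in>I. v1 x < b} = I"
      proof -
        { fix x assume x: "x \<in> I"
          have "v1 x \<le> \<delta>" using v1b x by blast
          with False have "v1 x < b" by linarith }
        then show ?thesis by blast
      qed
      moreover have "measure M {x\<in>space M - I. v2 x < b - \<delta>} = b - \<delta>" using v2d b False by simp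
      ultimately show ?thesis by (simp add: \<delta>_def)
    qed
    finally show ?thesis .
  qed
  show ?thesis using um unn uI ud unfolding \<delta>_def by blast
qed

lemma uniform_zero:
  assumes um: "u \<in> borel_measurable M" and ud: "\<forall>b. 0 \<le> b \<and> b \<le> 1 \<longrightarrow> measure M {x\<in>space M. u x < b} = b"
  shows "measure M {x\<in>space M. u x \<le> 0} = 0"
proof -
  have small: "measure M {x\<in>space M. u x \<le> 0} \<le> e" if e: "0 < e" "e \<le> 1" for e
  proof -
    have "measure M {x\<in>space M. u x \<le> 0} \<le> measure M {x\<in>space M. u x < e}"
      using um e by (intro finite_measure_mono) auto
    then show ?thesis using ud e by simp
  qed
  show ?thesis
  proof (rule ccontr)
    assume "measure M {x\<in>space M. u x \<le> 0} \<noteq> 0"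
    hence zp: "0 < measure M {x\<in>space M. u x \<le> 0}" using measure_nonneg[of M "{x\<in>space M. u x \<le> 0}"] by linarith
    define e where "e = min (measure M {x\<in>space M. u x \<le> 0}) 1 / 2"
    define z where "z = measure M {x\<in>space M. u x \<le> 0}"
    have e1: "e \<le> 1" unfolding e_def z_def[symmetric] using min.cobounded2[of z 1] by linarith
    have e0: "0 < e" unfolding e_def z_def[symmetric] using zp by (simp add: z_def)
    have "measure M {x\<in>space M. u x \<le> 0} \<le> e" using e0 e1 by (rule small)
    moreover have "e < measure M {x\<in>space M. u x \<le> 0}"
      unfolding e_def z_def[symmetric] using zp min.cobounded1[of z 1] by (simp add: z_def)
    ultimately show False by linarith
  qed
qed

lemma uniform_pos:
  assumes um: "u \<in> borel_measurable M" and ud: "\<forall>b. 0 \<le> b \<and> b \<le> 1 \<longrightarrow> measure M {x\<in>space M. u x < b} = b"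
    and b: "0 \<le> b" "b \<le> 1"
  shows "measure M {x\<in>space M. 0 < u x \<and> u x < b} = b"
proof -
  have z: "measure M {x\<in>space M. u x \<le> 0} = 0" by (rule uniform_zero[OF um ud])
  have "measure M {x\<in>space M. 0 < u x \<and> u x < b} \<le> measure M {x\<in>space M. u x < b}"
    using um by (intro finite_measure_mono) auto
  moreover have "measure M {x\<in>space M. u x < b} \<le> measure M ({x\<in>space M. 0 < u x \<and> u x < b} \<union> {x\<in>space M. u x \<le> 0})"
    using um by (intro finite_measure_mono) auto
  moreover have "measure M ({x\<in>space M. 0 < u x \<and> u x < b} \<union> {x\<in>space M. u x \<le> 0}) \<le>
      measure M {x\<in>space M. 0 < u x \<and> u x < b} + measure M {x\<in>space M. u x \<le> 0}"
    using um by (intro measure_Un_le) auto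
  ultimately show ?thesis using z ud b by simp
qed

end

context prob_space begin

lemma layer_cake:
  fixes h :: "'a \<Rightarrow> real"
  assumes hm: "h \<in> borel_measurable M" and hnn: "\<forall>x\<in>space M. 0 \<le> h x"
  shows "(\<integral>\<^sup>+x. ennreal (h x) \<partial>M) =
         (\<integral>\<^sup>+s. indicator {0<..} s * emeasure M {x\<in>space M. s < h x} \<partial>lborel)"
proof -
  interpret pst: pair_sigma_finite M lborel
    by (simp add: pair_sigma_finite.intro sigma_finite_measure_axioms lborel.sigma_finite_measure_axioms)
  define g where "g x s = (if 0 < s \<and> s < h x then 1 else 0 :: ennreal)" for x s
  have gm: "case_prod g \<in> borel_measurable (M \<Otimes>\<^sub>M lborel)"
    unfolding g_def using hm by measurable
  have "(\<integral>\<^sup>+x. ennreal (h x) \<partial>M) = (\<integral>\<^sup>+x. (\<integral>\<^sup>+s. g x s \<partial>lborel) \<partial>M)"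
  proof (rule nn_integral_cong)
    fix x assume x: "x \<in> space M"
    have "(\<lambda>s. g x s) = indicator {0<..<h x}" by (auto simp: g_def indicator_def fun_eq_iff)
    hence "(\<integral>\<^sup>+s. g x s \<partial>lborel) = emeasure lborel {0<..<h x}" by simp
    also have "\<dots> = ennreal (h x)" using hnn x by simp
    finally show "ennreal (h x) = (\<integral>\<^sup>+s. g x s \<partial>lborel)" ..
  qed
  also have "\<dots> = (\<integral>\<^sup>+s. (\<integral>\<^sup>+x. g x s \<partial>M) \<partial>lborel)"
    using pst.Fubini'[OF gm] by simp
  also have "\<dots> = (\<integral>\<^sup>+s. indicator {0<..} s * emeasure M {x\<in>space M. s < h x} \<partial>lborel)"
  proof (rule nn_integral_cong)
    fix s :: real
    have ms: "{x\<in>space M. s < h x} \<in> sets M" using hm by measurable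
    show "(\<integral>\<^sup>+x. g x s \<partial>M) = indicator {0<..} s * emeasure M {x\<in>space M. s < h x}"
    proof (cases "0 < s")
      case True
      have "(\<integral>\<^sup>+x. g x s \<partial>M) = (\<integral>\<^sup>+x. indicator {x\<in>space M. s < h x} x \<partial>M)"
        by (rule nn_integral_cong) (auto simp: g_def indicator_def True)
      then show ?thesis using ms True by simp
    next
      case False
      then show ?thesis by (simp add: g_def)
    qed
  qed
  finally show ?thesis .
qed

end

lemma powr_integral:
  fixes m F p :: real
  assumes m: "m > 0" and F: "F > 0" and p: "p > 1"
  shows "(\<integral>\<^sup>+s. indicator {0<..} s * ennreal (min m ((F/s) powr p)) \<partial>lborel)
         = ennreal (p/(p-1) * F * m powr (1 - 1/p))"
proof -
  define c where "c = F * m powr (-1/p)"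
  have c0: "c > 0" using F m by (simp add: c_def)
  have Fc: "F / c = m powr (1/p)" using F m by (simp add: c_def powr_minus divide_simps)
  have Fcp: "(F / c) powr p = m" using Fc m p by (simp add: powr_powr)
  have ge: "(F/s) powr p \<le> m" if "c \<le> s" for s
  proof -
    have "F / s \<le> F / c" using that c0 F by (simp add: frac_le)
    hence "(F/s) powr p \<le> (F/c) powr p" using p F c0 that by (intro powr_mono2) auto
    then show ?thesis using Fcp by simp
  qed
  have lt: "m < (F/s) powr p" if "0 < s" "s < c" for s
  proof -
    have "F / c < F / s" using that c0 F by (simp add: frac_less2)
    hence "(F/c) powr p < (F/s) powr p" using p F c0 that by (intro powr_less_mono2) auto
    then show ?thesis using Fcp by simp
  qed
  have pw: "(F/s) powr p = F powr p * s powr (-p)" if "0 < s" for s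
    using that F by (simp add: powr_divide powr_minus divide_simps)
  have eq: "indicator {0<..} s * ennreal (min m ((F/s) powr p)) =
      ennreal m * indicator {0<..<c} s + ennreal (indicator {c..} s * (F powr p * s powr (-p)))" for s :: real
  proof (cases "0 < s")
    case True
    show ?thesis
    proof (cases "s < c")
      case True
      then show ?thesis using lt[OF \<open>0<s\<close> True] \<open>0<s\<close> by (simp add: indicator_def)
    next
      case False
      then show ?thesis using ge[of s] \<open>0<s\<close> pw[OF \<open>0<s\<close>] by (simp add: indicator_def min_def)
    qed
  next
    case False
    then show ?thesis using c0 by (simp add: indicator_def)
  qed
  have int2: "((\<lambda>s. F powr p * s powr (-p)) has_integral F powr p * (-(c powr (-p+1)) / (-p+1))) {c..}"
    using has_integral_powr_to_inf[of "-p" c] p c0 by (intro has_integral_mult_right) auto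
  have I2: "(\<integral>\<^sup>+s. ennreal (indicator {c..} s * (F powr p * s powr (-p))) \<partial>lborel)
      = F powr p * (-(c powr (-p+1)) / (-p+1))"
    using nn_integral_has_integral_lebesgue[OF _ int2] c0 by auto
  have "(\<integral>\<^sup>+s. indicator {0<..} s * ennreal (min m ((F/s) powr p)) \<partial>lborel)
     = (\<integral>\<^sup>+s. ennreal m * indicator {0<..<c} s + ennreal (indicator {c..} s * (F powr p * s powr (-p))) \<partial>lborel)"
    by (simp add: eq)
  also have "\<dots> = (\<integral>\<^sup>+s. ennreal m * indicator {0<..<c} s \<partial>lborel) +
      (\<integral>\<^sup>+s. ennreal (indicator {c..} s * (F powr p * s powr (-p))) \<partial>lborel)"
    by (rule nn_integral_add) auto
  also have "\<dots> = ennreal (m * c) + ennreal (F powr p * (-(c powr (-p+1)) / (-p+1)))"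
  proof -
    have I1: "(\<integral>\<^sup>+s. ennreal m * indicator {0<..<c} s \<partial>lborel) = ennreal (m * c)"
      using c0 m by (simp add: nn_integral_cmult_indicator ennreal_mult)
    show ?thesis by (simp only: I1 I2)
  qed
  also have "\<dots> = ennreal (m * c + F powr p * (-(c powr (-p+1)) / (-p+1)))"
    using c0 m p F by (intro ennreal_plus[symmetric]) (auto simp: divide_simps)
  also have "m * c + F powr p * (-(c powr (-p+1)) / (-p+1)) = p/(p-1) * F * m powr (1 - 1/p)"
  proof -
    have mc: "m * c = F * m powr (1 - 1/p)"
      using m by (simp add: c_def powr_diff powr_minus field_simps)
    have "c powr (-p+1) = F powr (-p+1) * m powr ((-1/p) * (-p+1))"
      using F m by (simp add: c_def powr_mult powr_powr)
    also have "(-1/p) * (-p+1) = 1 - 1/p" using p by (simp add: field_simps)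
    finally have cp: "c powr (-p+1) = F powr (-p+1) * m powr (1 - 1/p)" .
    have FF: "F powr p * F powr (1 - p) = F" using F by (simp add: powr_add[symmetric])
    have "F powr p * (-(c powr (-p+1)) / (-p+1)) = (F powr p * F powr (-p+1)) * m powr (1 - 1/p) / (p - 1)"
      unfolding cp using p by (simp add: field_simps)
    also have "\<dots> = F * m powr (1 - 1/p) / (p - 1)" by (simp add: FF)
    finally have "F powr p * (-(c powr (-p+1)) / (-p+1)) = F * m powr (1 - 1/p) / (p - 1)" .
    moreover have "\<And>X::real. F * X + F * X / (p - 1) = p/(p-1) * F * X"
      using p by (simp add: field_simps)
    ultimately show ?thesis using mc by simp
  qed
  finally show ?thesis .
qed

lemma tree_level_Suc':
  "tree_level I C (Suc j) = (\<Union>K\<in>C I. tree_level K C j)"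
  by (induction j) auto

lemma tree_level_le_Suc:
  "(\<Union>j\<le>Suc n. tree_level I C j) = {I} \<union> (\<Union>K\<in>C I. \<Union>j\<le>n. tree_level K C j)"
proof -
  have "(\<Union>j\<le>Suc n. tree_level I C j) = tree_level I C 0 \<union> (\<Union>j\<le>n. tree_level I C (Suc j))"
    by (auto simp: atMost_Suc_eq_insert_0 simp del: tree_level.simps)
  also have "\<dots> = {I} \<union> (\<Union>K\<in>C I. \<Union>j\<le>n. tree_level K C j)"
    by (auto simp only: tree_level_Suc') auto
  finally show ?thesis .
qed

context prob_space begin

lemma tree_basic:
  assumes tr: "is_tree M T C" and I: "I \<in> T"
  shows "I \<in> sets M" "0 < measure M I" "finite (C I)" "C I \<subseteq> T"
    "\<forall>J1\<in>C I. \<forall>J2\<in>C I. J1 \<noteq> J2 \<longrightarrow> measure M (J1 \<inter> J2) = 0"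
    "\<forall>J\<in>C I. J \<subseteq> I" "\<Union>(C I) = I" "2 \<le> card (C I)"
proof -
  have h1: "\<forall>I\<in>T. I \<in> sets M \<and> 0 < measure M I"
    using tr unfolding is_tree_def by (elim conjE) assumption
  have h2: "\<forall>I\<in>T. finite (C I) \<and> 2 \<le> card (C I) \<and> C I \<subseteq> T \<and>
        (\<forall>J1\<in>C I. \<forall>J2\<in>C I. J1 \<noteq> J2 \<longrightarrow> measure M (J1 \<inter> J2) = 0) \<and>
        (\<forall>J\<in>C I. J \<subseteq> I) \<and> \<Union> (C I) = I"
    using tr unfolding is_tree_def by (elim conjE) assumption
  note a = h1[rule_format, OF I] and b = h2[rule_format, OF I]
  show "I \<in> sets M" "0 < measure M I" using a by simp_all
  show "finite (C I)" "C I \<subseteq> T"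
    "\<forall>J1\<in>C I. \<forall>J2\<in>C I. J1 \<noteq> J2 \<longrightarrow> measure M (J1 \<inter> J2) = 0"
    "\<forall>J\<in>C I. J \<subseteq> I" "\<Union>(C I) = I" "2 \<le> card (C I)"
    using b by simp_all
qed

lemma tree_desc:
  assumes tr: "is_tree M T C" and I: "I \<in> T"
  shows "\<forall>J\<in>tree_level I C j. J \<in> T \<and> J \<subseteq> I"
proof (induction j)
  case 0 then show ?case using I by simp
next
  case (Suc j)
  show ?case
  proof
    fix J assume "J \<in> tree_level I C (Suc j)"
    then obtain J' where J': "J' \<in> tree_level I C j" "J \<in> C J'" by auto
    hence "J' \<in> T" "J' \<subseteq> I" using Suc by auto
    then show "J \<in> T \<and> J \<subseteq> I" using tree_basic[OF tr \<open>J' \<in> T\<close>] J' by blast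
  qed
qed

lemma tree_level_finite:
  assumes tr: "is_tree M T C" and I: "I \<in> T"
  shows "finite (tree_level I C j)"
proof (induction j)
  case 0 then show ?case by simp
next
  case (Suc j)
  have "\<forall>J\<in>tree_level I C j. finite (C J)" using tree_desc[OF tr I, of j] tree_basic[OF tr] by blast
  then show ?case using Suc by simp
qed

lemma tree_countable:
  assumes tr: "is_tree M T C"
  shows "countable T"
proof -
  have sT: "space M \<in> T" and eq: "T = (\<Union>m. tree_level (space M) C m)" using tr unfolding is_tree_def by auto
  show ?thesis unfolding eq using tree_level_finite[OF tr sT]
    by (intro countable_UN) (auto intro: countable_finite)
qed

lemma tree_maximal_eq:
  assumes tr: "is_tree M T C"
  shows "tree_maximal M T \<phi> x = (SUP I\<in>T. indicator I x * ennreal ((LINT y:I|M. \<bar>\<phi> y\<bar>) / measure M I))"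
  unfolding tree_maximal_def
proof (rule antisym)
  show "(SUP I\<in>{I\<in>T. x \<in> I}. ennreal ((LINT y:I|M. \<bar>\<phi> y\<bar>) / measure M I))
      \<le> (SUP I\<in>T. indicator I x * ennreal ((LINT y:I|M. \<bar>\<phi> y\<bar>) / measure M I))"
    by (rule SUP_least) (auto intro: SUP_upper2)
  show "(SUP I\<in>T. indicator I x * ennreal ((LINT y:I|M. \<bar>\<phi> y\<bar>) / measure M I))
      \<le> (SUP I\<in>{I\<in>T. x \<in> I}. ennreal ((LINT y:I|M. \<bar>\<phi> y\<bar>) / measure M I))"
  proof (rule SUP_least)
    fix I assume "I \<in> T"
    then show "indicator I x * ennreal ((LINT y:I|M. \<bar>\<phi> y\<bar>) / measure M I)
      \<le> (SUP I\<in>{I\<in>T. x \<in> I}. ennreal ((LINT y:I|M. \<bar>\<phi> y\<bar>) / measure M I))"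
      by (cases "x \<in> I") (auto intro: SUP_upper2)
  qed
qed

lemma tree_maximal_measurable:
  assumes tr: "is_tree M T C"
  shows "tree_maximal M T \<phi> \<in> borel_measurable M"
proof -
  have "(\<lambda>x. SUP I\<in>T. indicator I x * ennreal ((LINT y:I|M. \<bar>\<phi> y\<bar>) / measure M I)) \<in> borel_measurable M"
  proof (rule borel_measurable_SUP)
    show "countable T" by (rule tree_countable[OF tr])
    fix I assume "I \<in> T"
    hence [measurable]: "I \<in> sets M" using tree_basic[OF tr] by blast
    show "(\<lambda>x. indicator I x * ennreal ((LINT y:I|M. \<bar>\<phi> y\<bar>) / measure M I)) \<in> borel_measurable M"
      by measurable
  qed
  then show ?thesis by (simp add: tree_maximal_eq[OF tr, abs_def])
qed

lemma ad_union:
  fixes g :: "'a \<Rightarrow> ennreal"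
  assumes fin: "finite \<K>" and S: "\<And>K. K \<in> \<K> \<Longrightarrow> S K \<in> sets M \<and> S K \<subseteq> K"
    and ad: "\<forall>K1\<in>\<K>. \<forall>K2\<in>\<K>. K1 \<noteq> K2 \<longrightarrow> measure M (K1 \<inter> K2) = 0"
    and Ks: "\<And>K. K \<in> \<K> \<Longrightarrow> K \<in> sets M" and gm: "g \<in> borel_measurable M"
  shows "(\<integral>\<^sup>+x. g x * indicator (\<Union>K\<in>\<K>. S K) x \<partial>M) = (\<Sum>K\<in>\<K>. \<integral>\<^sup>+x. g x * indicator (S K) x \<partial>M)"
proof -
  define N where "N = (\<Union>K1\<in>\<K>. \<Union>K2\<in>\<K> - {K1}. K1 \<inter> K2)"
  have "N \<in> null_sets M"
    unfolding N_def
  proof (intro null_sets_UN' countable_finite fin finite_Diff)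
    fix K1 K2 assume "K1 \<in> \<K>" "K2 \<in> \<K> - {K1}"
    then show "K1 \<inter> K2 \<in> null_sets M" using ad Ks
      by (auto simp: null_sets_def emeasure_eq_measure)
  qed
  hence ae: "AE x in M. x \<notin> N" by (rule AE_not_in)
  have pt: "indicator (\<Union>K\<in>\<K>. S K) x = (\<Sum>K\<in>\<K>. indicator (S K) x :: ennreal)" if x: "x \<notin> N" for x
  proof (cases "\<exists>K0\<in>\<K>. x \<in> S K0")
    case True
    then obtain K0 where K0: "K0 \<in> \<K>" "x \<in> S K0" by blast
    have "(\<Sum>K\<in>\<K>. indicator (S K) x :: ennreal) = (\<Sum>K\<in>\<K>. if K = K0 then 1 else 0)"
    proof (rule sum.cong)
      fix K assume K: "K \<in> \<K>"
      show "indicator (S K) x = (if K = K0 then 1 else (0::ennreal))"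
      proof (cases "K = K0")
        case True then show ?thesis using K0 by simp
      next
        case False
        have "x \<notin> S K"
        proof
          assume "x \<in> S K"
          hence "x \<in> K0 \<inter> K" using S[OF K] S[OF K0(1)] K0 by blast
          hence "x \<in> N" unfolding N_def using K K0 False by blast
          then show False using x by blast
        qed
        then show ?thesis using False by simp
      qed
    qed simp
    also have "\<dots> = 1" using fin K0 by simp
    finally show ?thesis using True by simp
  next
    case False
    then show ?thesis by simp
  qed
  have "(\<integral>\<^sup>+x. g x * indicator (\<Union>K\<in>\<K>. S K) x \<partial>M) = (\<integral>\<^sup>+x. (\<Sum>K\<in>\<K>. g x * indicator (S K) x) \<partial>M)"
    by (rule nn_integral_cong_AE) (use ae pt in \<open>auto simp: sum_distrib_left\<close>)
  also have "\<dots> = (\<Sum>K\<in>\<K>. \<integral>\<^sup>+x. g x * indicator (S K) x \<partial>M)"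
  proof (rule nn_integral_sum)
    fix K assume K: "K \<in> \<K>"
    hence [measurable]: "S K \<in> sets M" using S by blast
    show "(\<lambda>x. g x * indicator (S K) x) \<in> borel_measurable M" using gm by measurable
  qed
  finally show ?thesis .
qed

end

context prob_space begin

lemma lint_nn:
  assumes phi: "integrable M \<phi>" and J: "J \<in> sets M"
  shows "ennreal (LINT y:J|M. \<bar>\<phi> y\<bar>) = (\<integral>\<^sup>+y. ennreal \<bar>\<phi> y\<bar> * indicator J y \<partial>M)"
proof -
  have int: "integrable M (\<lambda>y. indicator J y *\<^sub>R \<bar>\<phi> y\<bar>)"
    by (rule integrable_mult_indicator[OF J integrable_abs[OF phi]])
  have "(\<integral>\<^sup>+y. ennreal (indicator J y *\<^sub>R \<bar>\<phi> y\<bar>) \<partial>M) = ennreal (integral\<^sup>L M (\<lambda>y. indicator J y *\<^sub>R \<bar>\<phi> y\<bar>))"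
    by (rule nn_integral_eq_integral[OF int]) (auto simp: indicator_def)
  moreover have "(\<lambda>y. ennreal (indicator J y *\<^sub>R \<bar>\<phi> y\<bar>)) = (\<lambda>y. ennreal \<bar>\<phi> y\<bar> * indicator J y)"
    by (auto simp: indicator_def fun_eq_iff)
  ultimately show ?thesis by (simp add: set_lebesgue_integral_def)
qed

definition avgQ :: "real \<Rightarrow> ('a \<Rightarrow> real) \<Rightarrow> 'a set \<Rightarrow> bool" where
  "avgQ t \<phi> J \<longleftrightarrow> ennreal t < ennreal ((LINT y:J|M. \<bar>\<phi> y\<bar>) / measure M J)"

definition GG :: "('a set \<Rightarrow> 'a set set) \<Rightarrow> real \<Rightarrow> ('a \<Rightarrow> real) \<Rightarrow> 'a set \<Rightarrow> nat \<Rightarrow> 'a set" where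
  "GG C t \<phi> I n = \<Union>{J \<in> (\<Union>j\<le>n. tree_level I C j). avgQ t \<phi> J}"

lemma Qbound:
  assumes phi: "integrable M \<phi>" and J: "J \<in> sets M" "0 < measure M J" and t: "0 < t"
    and Q: "avgQ t \<phi> J"
  shows "ennreal t * emeasure M J \<le> (\<integral>\<^sup>+y. ennreal \<bar>\<phi> y\<bar> * indicator J y \<partial>M)"
proof -
  have "t < (LINT y:J|M. \<bar>\<phi> y\<bar>) / measure M J"
    using Q t by (simp add: avgQ_def ennreal_less_iff)
  hence "t * measure M J \<le> (LINT y:J|M. \<bar>\<phi> y\<bar>)" using J by (simp add: field_simps)
  hence "ennreal (t * measure M J) \<le> ennreal (LINT y:J|M. \<bar>\<phi> y\<bar>)" by (rule ennreal_leI)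
  then show ?thesis using t by (simp add: lint_nn[OF phi J(1)] emeasure_eq_measure ennreal_mult)
qed

lemma GG_0: "GG C t \<phi> I 0 = (if avgQ t \<phi> I then I else {})"
  by (auto simp: GG_def)

lemma GG_Suc: "GG C t \<phi> I (Suc n) = (if avgQ t \<phi> I then I else {}) \<union> (\<Union>K\<in>C I. GG C t \<phi> K n)"
  unfolding GG_def tree_level_le_Suc by auto

lemma CZ:
  assumes tr: "is_tree M T C" and phi: "integrable M \<phi>" and t: "0 < t"
  shows "\<forall>I\<in>T. GG C t \<phi> I n \<in> sets M \<and> GG C t \<phi> I n \<subseteq> I \<and>
     ennreal t * emeasure M (GG C t \<phi> I n) \<le> (\<integral>\<^sup>+y. ennreal \<bar>\<phi> y\<bar> * indicator (GG C t \<phi> I n) y \<partial>M)"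
proof (induction n)
  case 0
  show ?case
  proof
    fix I assume I: "I \<in> T"
    note tb = tree_basic[OF tr I]
    show "GG C t \<phi> I 0 \<in> sets M \<and> GG C t \<phi> I 0 \<subseteq> I \<and>
     ennreal t * emeasure M (GG C t \<phi> I 0) \<le> (\<integral>\<^sup>+y. ennreal \<bar>\<phi> y\<bar> * indicator (GG C t \<phi> I 0) y \<partial>M)"
    proof (cases "avgQ t \<phi> I")
      case True
      then show ?thesis using Qbound[OF phi tb(1) tb(2) t True] tb(1) by (simp add: GG_0)
    next
      case False
      then show ?thesis by (simp add: GG_0)
    qed
  qed
next
  case (Suc n)
  show ?case
  proof
    fix I assume I: "I \<in> T"
    note tb = tree_basic[OF tr I]
    have IH: "\<And>K. K \<in> C I \<Longrightarrow> GG C t \<phi> K n \<in> sets M \<and> GG C t \<phi> K n \<subseteq> K \<and>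
       ennreal t * emeasure M (GG C t \<phi> K n) \<le> (\<integral>\<^sup>+y. ennreal \<bar>\<phi> y\<bar> * indicator (GG C t \<phi> K n) y \<partial>M)"
      using Suc tb(4) by blast
    have Ks: "\<And>K. K \<in> C I \<Longrightarrow> K \<in> sets M" using tb(4) tree_basic(1)[OF tr] by blast
    have sub: "(\<Union>K\<in>C I. GG C t \<phi> K n) \<subseteq> I" using IH tb(6) by blast
    show "GG C t \<phi> I (Suc n) \<in> sets M \<and> GG C t \<phi> I (Suc n) \<subseteq> I \<and>
     ennreal t * emeasure M (GG C t \<phi> I (Suc n)) \<le> (\<integral>\<^sup>+y. ennreal \<bar>\<phi> y\<bar> * indicator (GG C t \<phi> I (Suc n)) y \<partial>M)"
    proof (cases "avgQ t \<phi> I")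
      case True
      have "GG C t \<phi> I (Suc n) = I" using True sub by (simp add: GG_Suc) blast
      then show ?thesis using Qbound[OF phi tb(1) tb(2) t True] tb(1) by simp
    next
      case False
      have eq: "GG C t \<phi> I (Suc n) = (\<Union>K\<in>C I. GG C t \<phi> K n)" using False by (simp add: GG_Suc)
      have fs: "(\<Union>K\<in>C I. GG C t \<phi> K n) \<in> sets M" using IH tb(3) by blast
      have S: "\<And>K. K \<in> C I \<Longrightarrow> GG C t \<phi> K n \<in> sets M \<and> GG C t \<phi> K n \<subseteq> K" using IH by blast
      have phim: "(\<lambda>y. ennreal \<bar>\<phi> y\<bar>) \<in> borel_measurable M" using phi by measurable
      have m1: "emeasure M (\<Union>K\<in>C I. GG C t \<phi> K n) = (\<Sum>K\<in>C I. emeasure M (GG C t \<phi> K n))"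
        using ad_union[OF tb(3) S tb(5) Ks, of "\<lambda>_. 1"] fs S by simp
      have m2: "(\<integral>\<^sup>+y. ennreal \<bar>\<phi> y\<bar> * indicator (\<Union>K\<in>C I. GG C t \<phi> K n) y \<partial>M)
          = (\<Sum>K\<in>C I. \<integral>\<^sup>+y. ennreal \<bar>\<phi> y\<bar> * indicator (GG C t \<phi> K n) y \<partial>M)"
        by (rule ad_union[OF tb(3) S tb(5) Ks phim])
      have "ennreal t * emeasure M (\<Union>K\<in>C I. GG C t \<phi> K n) = (\<Sum>K\<in>C I. ennreal t * emeasure M (GG C t \<phi> K n))"
        by (simp add: m1 sum_distrib_left)
      also have "\<dots> \<le> (\<Sum>K\<in>C I. \<integral>\<^sup>+y. ennreal \<bar>\<phi> y\<bar> * indicator (GG C t \<phi> K n) y \<partial>M)"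
        using IH by (intro sum_mono) blast
      finally show ?thesis using eq fs sub m2 by simp
    qed
  qed
qed

lemma Eset:
  assumes tr: "is_tree M T C" and t: "0 < t"
  shows "{x\<in>space M. ennreal t < tree_maximal M T \<phi> x} = (\<Union>n. GG C t \<phi> (space M) n)"
proof -
  have sT: "space M \<in> T" and Teq: "T = (\<Union>m. tree_level (space M) C m)" using tr unfolding is_tree_def by auto
  show ?thesis
  proof (intro equalityI subsetI)
    fix x assume x: "x \<in> {x\<in>space M. ennreal t < tree_maximal M T \<phi> x}"
    then obtain J where J: "J \<in> T" "x \<in> J" "avgQ t \<phi> J"
      by (auto simp: tree_maximal_def less_SUP_iff avgQ_def)
    then obtain m where "J \<in> tree_level (space M) C m" using Teq by blast
    hence "J \<in> (\<Union>j\<le>m. tree_level (space M) C j)" by blast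
    then show "x \<in> (\<Union>n. GG C t \<phi> (space M) n)" using J unfolding GG_def by blast
  next
    fix x assume "x \<in> (\<Union>n. GG C t \<phi> (space M) n)"
    then obtain J j where J: "J \<in> tree_level (space M) C j" "avgQ t \<phi> J" "x \<in> J"
      unfolding GG_def by blast
    hence JT: "J \<in> T" using Teq by blast
    hence "J \<subseteq> space M" using tree_basic(1)[OF tr JT] sets.sets_into_space by blast
    moreover have "ennreal t < tree_maximal M T \<phi> x"
      unfolding tree_maximal_def less_SUP_iff using J JT by (auto simp: avgQ_def)
    ultimately show "x \<in> {x\<in>space M. ennreal t < tree_maximal M T \<phi> x}" using J by blast
  qed
qed

lemma GG_inc:
  "GG C t \<phi> I n \<subseteq> GG C t \<phi> I (Suc n)"
  unfolding GG_def by (auto intro: le_SucI)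

end

context prob_space begin

lemma weak_bound:
  assumes nn: "\<forall>x\<in>space M. 0 \<le> \<phi> x" and wk: "weak_norm M p (\<lambda>x. ennreal \<bar>\<phi> x\<bar>) \<le> ennreal F"
    and F: "0 < F" and s: "0 < s"
  shows "s * measure M {x\<in>space M. s < \<phi> x} powr (1/p) \<le> F"
proof -
  have "ennreal (s * measure M {x\<in>space M. ennreal s < ennreal \<bar>\<phi> x\<bar>} powr (1/p)) \<le> weak_norm M p (\<lambda>x. ennreal \<bar>\<phi> x\<bar>)"
    unfolding weak_norm_def using s by (intro SUP_upper) auto
  also have "\<dots> \<le> ennreal F" by fact
  finally have "s * measure M {x\<in>space M. ennreal s < ennreal \<bar>\<phi> x\<bar>} powr (1/p) \<le> F"
    using F by (simp add: ennreal_le_iff)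
  moreover have "{x\<in>space M. ennreal s < ennreal \<bar>\<phi> x\<bar>} = {x\<in>space M. s < \<phi> x}"
    using nn s by (auto simp: ennreal_less_iff)
  ultimately show ?thesis by simp
qed

lemma dist_bound:
  assumes p: "1 < p" and F: "0 < F" and s: "0 < s"
    and b: "s * measure M A powr (1/p) \<le> F"
  shows "measure M A \<le> (F/s) powr p"
proof -
  have "measure M A powr (1/p) \<le> F / s" using b s by (simp add: field_simps)
  hence "(measure M A powr (1/p)) powr p \<le> (F/s) powr p" using p by (intro powr_mono2) auto
  then show ?thesis using p by (simp add: powr_powr)
qed

lemma local_bound:
  assumes p: "1 < p" and F: "0 < F" and phim: "\<phi> \<in> borel_measurable M"
    and nn: "\<forall>x\<in>space M. 0 \<le> \<phi> x"
    and db: "\<And>s. 0 < s \<Longrightarrow> measure M {x\<in>space M. s < \<phi> x} \<le> (F/s) powr p"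
    and G: "G \<in> sets M" and Gp: "0 < measure M G"
  shows "(\<integral>\<^sup>+y. ennreal \<bar>\<phi> y\<bar> * indicator G y \<partial>M) \<le> ennreal (p/(p-1) * F * measure M G powr (1 - 1/p))"
proof -
  define h where "h y = \<phi> y * indicator G y" for y
  have hm: "h \<in> borel_measurable M" unfolding h_def using phim G by measurable
  have hnn: "\<forall>x\<in>space M. 0 \<le> h x" using nn by (auto simp: h_def indicator_def)
  have "(\<integral>\<^sup>+y. ennreal \<bar>\<phi> y\<bar> * indicator G y \<partial>M) = (\<integral>\<^sup>+y. ennreal (h y) \<partial>M)"
    by (rule nn_integral_cong) (use nn in \<open>auto simp: h_def indicator_def\<close>)
  also have "\<dots> = (\<integral>\<^sup>+s. indicator {0<..} s * emeasure M {x\<in>space M. s < h x} \<partial>lborel)"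
    by (rule layer_cake[OF hm hnn])
  also have "\<dots> \<le> (\<integral>\<^sup>+s. indicator {0<..} s * ennreal (min (measure M G) ((F/s) powr p)) \<partial>lborel)"
  proof (rule nn_integral_mono)
    fix s :: real
    show "indicator {0<..} s * emeasure M {x\<in>space M. s < h x}
        \<le> indicator {0<..} s * ennreal (min (measure M G) ((F/s) powr p))"
    proof (cases "0 < s")
      case True
      have eq: "{x\<in>space M. s < h x} = G \<inter> {x\<in>space M. s < \<phi> x}"
        using True by (auto simp: h_def indicator_def)
      have ms: "{x\<in>space M. s < \<phi> x} \<in> sets M" using phim by measurable
      have "measure M (G \<inter> {x\<in>space M. s < \<phi> x}) \<le> measure M G"
        using G ms by (intro finite_measure_mono) auto
      moreover have "measure M (G \<inter> {x\<in>space M. s < \<phi> x}) \<le> measure M {x\<in>space M. s < \<phi> x}"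
        using G ms by (intro finite_measure_mono) auto
      ultimately have "measure M (G \<inter> {x\<in>space M. s < \<phi> x}) \<le> min (measure M G) ((F/s) powr p)"
        using db[OF True] by linarith
      hence "emeasure M {x\<in>space M. s < h x} \<le> ennreal (min (measure M G) ((F/s) powr p))"
        unfolding eq emeasure_eq_measure by (rule ennreal_leI)
      then show ?thesis using True by simp
    next
      case False then show ?thesis by simp
    qed
  qed
  also have "\<dots> = ennreal (p/(p-1) * F * measure M G powr (1 - 1/p))"
    by (rule powr_integral[OF Gp F p])
  finally show ?thesis .
qed

lemma upper_bound:
  assumes tr: "is_tree M T C" and p: "1 < p" and F: "0 < F" and phi: "integrable M \<phi>"
    and nn: "\<forall>x\<in>space M. 0 \<le> \<phi> x"
    and wk: "weak_norm M p (\<lambda>x. ennreal \<bar>\<phi> x\<bar>) \<le> ennreal F" and t: "0 < t"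
  shows "t * measure M {x\<in>space M. ennreal t < tree_maximal M T \<phi> x} powr (1/p) \<le> p/(p-1) * F"
proof -
  define k where "k = p/(p-1)"
  have k0: "0 < k" using p by (simp add: k_def)
  have phim: "\<phi> \<in> borel_measurable M" using phi by measurable
  have db: "\<And>s. 0 < s \<Longrightarrow> measure M {x\<in>space M. s < \<phi> x} \<le> (F/s) powr p"
    using weak_bound[OF nn wk F] dist_bound[OF p F] by blast
  have sT: "space M \<in> T" using tr unfolding is_tree_def by auto
  define G where "G n = GG C t \<phi> (space M) n" for n
  have Gs: "G n \<in> sets M" and Gb: "ennreal t * emeasure M (G n) \<le> (\<integral>\<^sup>+y. ennreal \<bar>\<phi> y\<bar> * indicator (G n) y \<partial>M)" for n
    using CZ[OF tr phi t, of n] sT unfolding G_def by blast+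
  have each: "t * measure M (G n) powr (1/p) \<le> k * F" for n
  proof (cases "measure M (G n) = 0")
    case True then show ?thesis using k0 F p by simp
  next
    case False
    define m where "m = measure M (G n)"
    have mp: "0 < m" using False by (simp add: m_def zero_less_measure_iff)
    have "ennreal (t * m) \<le> ennreal (k * F * m powr (1 - 1/p))"
      using Gb[of n] local_bound[OF p F phim nn db Gs[of n]] mp t
      by (simp add: m_def emeasure_eq_measure ennreal_mult k_def)
    hence le: "t * m \<le> k * F * m powr (1 - 1/p)"
      using k0 F by (subst (asm) ennreal_le_iff) auto
    have split: "m = m powr (1/p) * m powr (1 - 1/p)" using mp by (simp add: powr_add[symmetric])
    have "t * m powr (1/p) * m powr (1 - 1/p) \<le> k * F * m powr (1 - 1/p)"
      using le split by (simp add: mult.assoc)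
    hence "t * m powr (1/p) \<le> k * F" using mp by simp
    then show ?thesis by (simp add: m_def)
  qed
  have E: "{x\<in>space M. ennreal t < tree_maximal M T \<phi> x} = (\<Union>n. G n)"
    unfolding G_def by (rule Eset[OF tr t])
  have lim: "(\<lambda>n. measure M (G n)) \<longlonglongrightarrow> measure M (\<Union>n. G n)"
  proof (rule finite_Lim_measure_incseq)
    show "range G \<subseteq> sets M" using Gs by blast
    show "incseq G" by (rule incseq_SucI) (simp add: G_def GG_inc)
  qed
  show ?thesis
  proof (rule ccontr)
    define L where "L = measure M (\<Union>n. G n)"
    assume "\<not> ?thesis"
    hence big: "k * F < t * L powr (1/p)" unfolding E L_def k_def by simp
    define c where "c = (k * F / t) powr p"
    have "k * F / t < L powr (1/p)" using big t by (simp add: field_simps)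
    hence "(k * F / t) powr p < (L powr (1/p)) powr p"
      using p k0 F t by (intro powr_less_mono2) auto
    moreover have "L \<ge> 0" unfolding L_def by simp
    ultimately have cL: "c < L" using p by (simp add: c_def powr_powr)
    then obtain n where n: "c < measure M (G n)"
      using lim unfolding L_def[symmetric] by (metis LIMSEQ_le_const2 linorder_not_le)
    have "(k * F / t) = c powr (1/p)" using p k0 F t by (simp add: c_def powr_powr)
    also have "\<dots> < measure M (G n) powr (1/p)"
      using n p k0 F t by (intro powr_less_mono2) (auto simp: c_def)
    finally have "k * F < t * measure M (G n) powr (1/p)" using t by (simp add: field_simps)
    then show False using each[of n] by simp
  qed
qed

end

lemma pw_iff:
  fixes s t F p :: real
  assumes t: "0 < t" and s: "0 < s" and F: "0 < F" and p: "0 < p"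
  shows "(s < F * t powr (-1/p)) \<longleftrightarrow> (t < (F/s) powr p)"
proof -
  have "s < F * t powr (-1/p) \<longleftrightarrow> t powr (1/p) < F / s"
    using t s F by (simp add: powr_minus_divide field_simps)
  also have "\<dots> \<longleftrightarrow> (t powr (1/p)) powr p < (F/s) powr p"
  proof
    assume "t powr (1/p) < F / s"
    then show "(t powr (1/p)) powr p < (F/s) powr p" using p by (intro powr_less_mono2) auto
  next
    assume a: "(t powr (1/p)) powr p < (F/s) powr p"
    show "t powr (1/p) < F / s"
    proof (rule ccontr)
      assume "\<not> t powr (1/p) < F / s"
      hence "(F/s) powr p \<le> (t powr (1/p)) powr p" using p s F by (intro powr_mono2) auto
      then show False using a by simp
    qed
  qed
  also have "(t powr (1/p)) powr p = t" using p t by (simp add: powr_powr)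
  finally show ?thesis .
qed

context prob_space begin

lemma tree_level_nonempty:
  assumes tr: "is_tree M T C"
  shows "tree_level (space M) C m \<noteq> {}"
proof (induction m)
  case 0 then show ?case by simp
next
  case (Suc m)
  have sT: "space M \<in> T" using tr unfolding is_tree_def by auto
  from Suc obtain I where I: "I \<in> tree_level (space M) C m" by blast
  have IT: "I \<in> T" using tree_desc[OF tr sT, of m] I by blast
  have "2 \<le> card (C I)" "finite (C I)" using tree_basic[OF tr IT] by auto
  hence "C I \<noteq> {}" by auto
  then show ?case using I by auto
qed

lemma tree_small:
  assumes tr: "is_tree M T C" and a: "0 < a"
  shows "\<exists>I\<in>T. 0 < measure M I \<and> measure M I \<le> a"
proof -
  have sT: "space M \<in> T" and lim: "(\<lambda>m. SUP I\<in>tree_level (space M) C m. measure M I) \<longlonglongrightarrow> 0"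
    using tr unfolding is_tree_def by auto
  from lim a obtain m where m: "(SUP I\<in>tree_level (space M) C m. measure M I) < a"
    by (metis (no_types, lifting) LIMSEQ_le_const linorder_not_le order.refl)
  from tree_level_nonempty[OF tr, of m] obtain I where I: "I \<in> tree_level (space M) C m" by blast
  have IT: "I \<in> T" using tree_desc[OF tr sT, of m] I by blast
  have "measure M I \<le> (SUP I\<in>tree_level (space M) C m. measure M I)"
    using I tree_level_finite[OF tr sT, of m] by (intro cSUP_upper) (auto intro: bdd_above_finite)
  then show ?thesis using m IT tree_basic(2)[OF tr IT] by (intro bexI[of _ I]) auto
qed

lemma lower_bound:
  assumes na: "nonatomic M" and tr: "is_tree M T C" and p: "1 < p" and F: "0 < F"
    and f: "0 < f" "f \<le> p/(p-1) * F"
  shows "\<exists>\<phi>. integrable M \<phi> \<and> (\<forall>x\<in>space M. 0 \<le> \<phi> x) \<and> (\<integral>x. \<phi> x \<partial>M) = f \<and>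
      weak_norm M p (\<lambda>x. ennreal \<bar>\<phi> x\<bar>) = ennreal F \<and>
      ennreal (p/(p-1) * F) \<le> weak_norm M p (tree_maximal M T \<phi>)"
proof -
  define k where "k = p/(p-1)"
  have k0: "0 < k" using p by (simp add: k_def)
  have k1: "1 - 1/p = 1/k" using p by (simp add: k_def field_simps)
  define a where "a = (f / (k * F)) powr k"
  have r0: "0 < f / (k * F)" using f k0 F by simp
  have fk: "f \<le> k * F" using f(2) by (simp add: k_def)
  have r1: "f / (k * F) \<le> 1" using fk k0 F by (simp add: divide_le_eq_1)
  have a0: "0 < a" using r0 f k0 F by (simp add: a_def)
  have a1: "a \<le> 1" unfolding a_def using r0 r1 k0 by (intro powr_le1) auto
  have apow: "a powr (1 - 1/p) = f / (k * F)" unfolding k1 a_def using r0 k0 f F by (simp add: powr_powr)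
  obtain I where IT: "I \<in> T" and Ip: "0 < measure M I" and Ia: "measure M I \<le> a"
    using tree_small[OF tr a0] by blast
  define \<delta> where "\<delta> = measure M I"
  have Is: "I \<in> sets M" using tree_basic(1)[OF tr IT] .
  obtain u where um: "u \<in> borel_measurable M" and unn: "\<forall>x\<in>space M. 0 \<le> u x"
    and uI: "\<forall>x\<in>space M. u x < \<delta> \<longrightarrow> x \<in> I"
    and ud: "\<forall>b. 0 \<le> b \<and> b \<le> 1 \<longrightarrow> measure M {x\<in>space M. u x < b} = b"
    using uniform_split[OF na Is] unfolding \<delta>_def by blast
  note [measurable] = um
  define \<phi> where "\<phi> x = (if 0 < u x \<and> u x < a then F * u x powr (-1/p) else 0)" for x
  have phim: "\<phi> \<in> borel_measurable M" unfolding \<phi>_def by measurable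
  have phinn: "\<forall>x\<in>space M. 0 \<le> \<phi> x" using F by (auto simp: \<phi>_def)
  have lev: "{x\<in>space M. s < \<phi> x} = {x\<in>space M. 0 < u x \<and> u x < min a ((F/s) powr p)}" if s: "0 < s" for s
    using s pw_iff[of _ s F p] F p by (auto simp: \<phi>_def)
  have levm: "measure M {x\<in>space M. s < \<phi> x} = min a ((F/s) powr p)" if s: "0 < s" for s
    unfolding lev[OF s] using a0 a1 by (intro uniform_pos[OF um ud]) auto
  have "(\<integral>\<^sup>+x. ennreal (\<phi> x) \<partial>M) = (\<integral>\<^sup>+s. indicator {0<..} s * emeasure M {x\<in>space M. s < \<phi> x} \<partial>lborel)"
    by (rule layer_cake[OF phim phinn])
  also have "\<dots> = (\<integral>\<^sup>+s. indicator {0<..} s * ennreal (min a ((F/s) powr p)) \<partial>lborel)"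
    by (rule nn_integral_cong) (auto simp: emeasure_eq_measure levm indicator_def)
  also have "\<dots> = ennreal (k * F * a powr (1 - 1/p))"
    unfolding k_def by (rule powr_integral[OF a0 F p])
  also have "k * F * a powr (1 - 1/p) = f" using k0 F by (simp add: apow)
  finally have nnI: "(\<integral>\<^sup>+x. ennreal (\<phi> x) \<partial>M) = ennreal f" .
  have phint: "integrable M \<phi>"
    by (rule integrableI_nn_integral_finite[OF phim _ nnI]) (use phinn in \<open>auto intro: AE_I2\<close>)
  have phiI: "(\<integral>x. \<phi> x \<partial>M) = f"
    using integral_eq_nn_integral[OF phim] phinn nnI f by (simp add: AE_I2)
  have wk: "weak_norm M p (\<lambda>x. ennreal \<bar>\<phi> x\<bar>) = ennreal F"
  proof -
    have set_eq: "{x\<in>space M. ennreal s < ennreal \<bar>\<phi> x\<bar>} = {x\<in>space M. s < \<phi> x}" if "0 < s" for s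
      using that phinn by (auto simp: ennreal_less_iff)
    have tm: "s * measure M {x\<in>space M. ennreal s < ennreal \<bar>\<phi> x\<bar>} powr (1/p) \<le> F" if s: "0 < s" for s
    proof -
      have "min a ((F/s) powr p) powr (1/p) \<le> ((F/s) powr p) powr (1/p)"
        using p a0 by (intro powr_mono2) auto
      also have "\<dots> = F / s" using p F s by (simp add: powr_powr)
      finally have "s * min a ((F/s) powr p) powr (1/p) \<le> s * (F / s)"
        using s by (intro mult_left_mono) auto
      then show ?thesis using s by (simp add: set_eq levm)
    qed
    define s0 where "s0 = F * a powr (-1/p)"
    have s0p: "0 < s0" using F a0 by (simp add: s0_def)
    have "(F/s0) powr p = a" using a0 F p by (simp add: s0_def powr_minus_divide powr_powr)
    hence "s0 * measure M {x\<in>space M. ennreal s0 < ennreal \<bar>\<phi> x\<bar>} powr (1/p) = s0 * a powr (1/p)"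
      using s0p by (simp add: set_eq levm)
    also have "\<dots> = F" using a0 by (simp add: s0_def powr_minus_divide)
    finally have t0: "s0 * measure M {x\<in>space M. ennreal s0 < ennreal \<bar>\<phi> x\<bar>} powr (1/p) = F" .
    show ?thesis unfolding weak_norm_def
    proof (rule antisym)
      show "(SUP t\<in>{0<..}. ennreal (t * measure M {x\<in>space M. ennreal t < ennreal \<bar>\<phi> x\<bar>} powr (1/p))) \<le> ennreal F"
        using tm by (intro SUP_least) (auto intro: ennreal_leI)
      show "ennreal F \<le> (SUP t\<in>{0<..}. ennreal (t * measure M {x\<in>space M. ennreal t < ennreal \<bar>\<phi> x\<bar>} powr (1/p)))"
        using t0 s0p by (intro SUP_upper2[of s0]) auto
    qed
  qed
  have d0: "0 < \<delta>" "\<delta> \<le> a" using Ip Ia by (auto simp: \<delta>_def)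
  define \<psi> where "\<psi> x = (if u x < \<delta> then \<phi> x else 0)" for x
  have psim: "\<psi> \<in> borel_measurable M" unfolding \<psi>_def using phim by measurable
  have psinn: "\<forall>x\<in>space M. 0 \<le> \<psi> x" using phinn by (auto simp: \<psi>_def)
  have levpsi: "{x\<in>space M. s < \<psi> x} = {x\<in>space M. 0 < u x \<and> u x < min \<delta> ((F/s) powr p)}" if s: "0 < s" for s
    using s pw_iff[of _ s F p] F p d0 by (auto simp: \<psi>_def \<phi>_def)
  have "(\<integral>\<^sup>+x. ennreal (\<psi> x) \<partial>M) = (\<integral>\<^sup>+s. indicator {0<..} s * emeasure M {x\<in>space M. s < \<psi> x} \<partial>lborel)"
    by (rule layer_cake[OF psim psinn])
  also have "\<dots> = (\<integral>\<^sup>+s. indicator {0<..} s * ennreal (min \<delta> ((F/s) powr p)) \<partial>lborel)"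
  proof (rule nn_integral_cong)
    fix s :: real
    show "indicator {0<..} s * emeasure M {x\<in>space M. s < \<psi> x} = indicator {0<..} s * ennreal (min \<delta> ((F/s) powr p))"
    proof (cases "0 < s")
      case True
      have "measure M {x\<in>space M. s < \<psi> x} = min \<delta> ((F/s) powr p)"
        unfolding levpsi[OF True] using d0 a1 by (intro uniform_pos[OF um ud]) auto
      then show ?thesis by (simp add: emeasure_eq_measure)
    qed simp
  qed
  also have "\<dots> = ennreal (k * F * \<delta> powr (1 - 1/p))"
    unfolding k_def by (rule powr_integral[OF d0(1) F p])
  finally have psiI: "(\<integral>\<^sup>+x. ennreal (\<psi> x) \<partial>M) = ennreal (k * F * \<delta> powr (1 - 1/p))" .
  have "(\<integral>\<^sup>+x. ennreal (\<psi> x) \<partial>M) \<le> (\<integral>\<^sup>+x. ennreal \<bar>\<phi> x\<bar> * indicator I x \<partial>M)"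
  proof (rule nn_integral_mono)
    fix x assume x: "x \<in> space M"
    show "ennreal (\<psi> x) \<le> ennreal \<bar>\<phi> x\<bar> * indicator I x"
    proof (cases "u x < \<delta>")
      case True
      hence "x \<in> I" using uI x by blast
      then show ?thesis using True phinn x by (simp add: \<psi>_def)
    next
      case False then show ?thesis by (simp add: \<psi>_def)
    qed
  qed
  hence "ennreal (k * F * \<delta> powr (1 - 1/p)) \<le> ennreal (LINT y:I|M. \<bar>\<phi> y\<bar>)"
    using psiI lint_nn[OF phint Is] by simp
  hence lint: "k * F * \<delta> powr (1 - 1/p) \<le> (LINT y:I|M. \<bar>\<phi> y\<bar>)"
    by (subst (asm) ennreal_le_iff) (auto intro: integral_nonneg_AE simp: set_lebesgue_integral_def)
  define A where "A = k * F * \<delta> powr (-1/p)"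
  have A0: "0 < A" using k0 F d0 by (simp add: A_def)
  have avg: "A \<le> (LINT y:I|M. \<bar>\<phi> y\<bar>) / \<delta>"
  proof -
    have "A = k * F * \<delta> powr (1 - 1/p) / \<delta>"
      using d0 by (simp add: A_def powr_diff powr_minus_divide field_simps)
    then show ?thesis using lint d0 by (simp add: divide_right_mono)
  qed
  have Mbig: "ennreal A \<le> tree_maximal M T \<phi> x" if x: "x \<in> I" for x
  proof -
    have "ennreal A \<le> ennreal ((LINT y:I|M. \<bar>\<phi> y\<bar>) / measure M I)"
      using avg by (intro ennreal_leI) (simp add: \<delta>_def)
    also have "\<dots> \<le> tree_maximal M T \<phi> x"
      unfolding tree_maximal_def using IT x by (intro SUP_upper) auto
    finally show ?thesis .
  qed
  have Mm: "tree_maximal M T \<phi> \<in> borel_measurable M" by (rule tree_maximal_measurable[OF tr])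
  have wkM: "ennreal (k * F) \<le> weak_norm M p (tree_maximal M T \<phi>)"
  proof (rule dense_le_bounded[of 0])
    show "0 < ennreal (k * F)" using k0 F by simp
    fix w assume w: "0 < w" "w < ennreal (k * F)"
    then obtain r where r: "w = ennreal r" "0 < r" "r < k * F"
      by (metis ennreal_less_iff ennreal_cases ennreal_less_zero_iff less_le_trans not_less_iff_gr_or_eq order.strict_implies_order top.not_eq_extremum)
    define t where "t = r * \<delta> powr (-1/p)"
    have t0: "0 < t" using r d0 by (simp add: t_def)
    have tA: "t < A" using r d0 by (simp add: t_def A_def)
    have sub: "I \<subseteq> {x\<in>space M. ennreal t < tree_maximal M T \<phi> x}"
    proof
      fix x assume x: "x \<in> I"
      have "ennreal t < ennreal A" using tA t0 by (simp add: ennreal_less_iff)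
      also have "\<dots> \<le> tree_maximal M T \<phi> x" by (rule Mbig[OF x])
      finally show "x \<in> {x\<in>space M. ennreal t < tree_maximal M T \<phi> x}"
        using x sets.sets_into_space[OF Is] by blast
    qed
    have "{x\<in>space M. ennreal t < tree_maximal M T \<phi> x} \<in> sets M" using Mm by measurable
    hence "\<delta> \<le> measure M {x\<in>space M. ennreal t < tree_maximal M T \<phi> x}"
      unfolding \<delta>_def using sub by (intro finite_measure_mono) auto
    hence "\<delta> powr (1/p) \<le> measure M {x\<in>space M. ennreal t < tree_maximal M T \<phi> x} powr (1/p)"
      using d0 p by (intro powr_mono2) auto
    hence "t * \<delta> powr (1/p) \<le> t * measure M {x\<in>space M. ennreal t < tree_maximal M T \<phi> x} powr (1/p)"
      using t0 by (intro mult_left_mono) auto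
    moreover have "t * \<delta> powr (1/p) = r" using d0 by (simp add: t_def powr_minus_divide)
    ultimately have "ennreal r \<le> ennreal (t * measure M {x\<in>space M. ennreal t < tree_maximal M T \<phi> x} powr (1/p))"
      by (intro ennreal_leI) simp
    also have "\<dots> \<le> weak_norm M p (tree_maximal M T \<phi>)"
      unfolding weak_norm_def using t0 by (intro SUP_upper) auto
    finally show "w \<le> weak_norm M p (tree_maximal M T \<phi>)" using r by simp
  qed
  show ?thesis using phint phinn phiI wk wkM unfolding k_def by blast
qed

end

theorem corollary4p2:
  fixes M :: "'a measure" and T :: "'a set set" and C :: "'a set \<Rightarrow> 'a set set"
    and p k f F :: real
  assumes "prob_space M" and "nonatomic M" and "is_tree M T C"
    and "p > 1" and "k = p / (p - 1)" and "F > 0" and "0 < f" and "f \<le> k * F"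
  shows "(SUP \<phi>\<in>{\<phi>. integrable M \<phi> \<and> (\<forall>x\<in>space M. 0 \<le> \<phi> x) \<and>
                      (\<integral>x. \<phi> x \<partial>M) = f \<and>
                      weak_norm M p (\<lambda>x. ennreal \<bar>\<phi> x\<bar>) = ennreal F}.
            weak_norm M p (tree_maximal M T \<phi>)) = ennreal (k * F)"
proof -
  interpret prob_space M by fact
  note tr = assms(3) and p = assms(4) and kdef = assms(5) and F = assms(6)
  have up: "weak_norm M p (tree_maximal M T \<phi>) \<le> ennreal (k * F)"
    if phi: "\<phi> \<in> {\<phi>. integrable M \<phi> \<and> (\<forall>x\<in>space M. 0 \<le> \<phi> x) \<and>
                      (\<integral>x. \<phi> x \<partial>M) = f \<and>
                      weak_norm M p (\<lambda>x. ennreal \<bar>\<phi> x\<bar>) = ennreal F}" for \<phi>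
    unfolding weak_norm_def
  proof (rule SUP_least)
    fix t :: real assume t: "t \<in> {0<..}"
    have "t * measure M {x\<in>space M. ennreal t < tree_maximal M T \<phi> x} powr (1/p) \<le> p/(p-1) * F"
      using phi t by (intro upper_bound[OF tr p F]) auto
    then show "ennreal (t * measure M {x\<in>space M. ennreal t < tree_maximal M T \<phi> x} powr (1/p)) \<le> ennreal (k * F)"
      unfolding kdef by (rule ennreal_leI)
  qed
  obtain \<phi>0 where phi0: "integrable M \<phi>0" "\<forall>x\<in>space M. 0 \<le> \<phi>0 x" "(\<integral>x. \<phi>0 x \<partial>M) = f"
    "weak_norm M p (\<lambda>x. ennreal \<bar>\<phi>0 x\<bar>) = ennreal F"
    "ennreal (p/(p-1) * F) \<le> weak_norm M p (tree_maximal M T \<phi>0)"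
    using lower_bound[OF assms(2) tr p F assms(7)] assms(8) kdef by blast
  show ?thesis
  proof (rule antisym)
    show "(SUP \<phi>\<in>{\<phi>. integrable M \<phi> \<and> (\<forall>x\<in>space M. 0 \<le> \<phi> x) \<and>
                      (\<integral>x. \<phi> x \<partial>M) = f \<and>
                      weak_norm M p (\<lambda>x. ennreal \<bar>\<phi> x\<bar>) = ennreal F}.
            weak_norm M p (tree_maximal M T \<phi>)) \<le> ennreal (k * F)"
      by (rule SUP_least) (rule up)
    show "ennreal (k * F) \<le> (SUP \<phi>\<in>{\<phi>. integrable M \<phi> \<and> (\<forall>x\<in>space M. 0 \<le> \<phi> x) \<and>
                      (\<integral>x. \<phi> x \<partial>M) = f \<and>
                      weak_norm M p (\<lambda>x. ennreal \<bar>\<phi> x\<bar>) = ennreal F}.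
            weak_norm M p (tree_maximal M T \<phi>))"
      using phi0 kdef by (intro SUP_upper2[of \<phi>0]) auto
  qed
qed

end
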